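(* Let $k\ge0$ and $\ell\ge4$ be integers and let $G$ be a bipartite graph of order $n\ge (k+\lfloor\ell/2\rfloor-1)^2-(k+\lfloor\ell/2\rfloor-2)\ell+\ell^2k+\ell^2-\ell$ that contains no subgraph isomorphic to $kS_{\ell-1}\cup P_\ell$. Then $e(G)\le (k+\lfloor\ell/2\rfloor-1)n$.
   Context: $P_\ell$ is the path of order $\ell$; $S_{\ell-1}=K_{1,\ell-1}$ is the star of order $\ell$; $kS_{\ell-1}\cup P_\ell$ is the vertex-disjoint union of $k$ copies of $S_{\ell-1}$ and one $P_\ell$ (for $k=0$ it is just $P_\ell$). $e(G)$ is the number of edges. *)

theory Defs
  imports Main
begin

definition simple_graph :: "'a set \<Rightarrow> 'a set set \<Rightarrow> bool" where
  "simple_graph V E \<longleftrightarrow> finite V \<and>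
     (\<forall>e\<in>E. \<exists>u v. e = {u, v} \<and> u \<noteq> v \<and> u \<in> V \<and> v \<in> V)"

definition bipartite :: "'a set \<Rightarrow> 'a set set \<Rightarrow> bool" where
  "bipartite V E \<longleftrightarrow> (\<exists>A B. A \<inter> B = {} \<and> A \<union> B = V \<and>
     (\<forall>e\<in>E. \<exists>u\<in>A. \<exists>v\<in>B. e = {u, v}))"

definition contains_subgraph :: "'b set \<Rightarrow> 'b set set \<Rightarrow> 'a set \<Rightarrow> 'a set set \<Rightarrow> bool" where
  "contains_subgraph VH EH V E \<longleftrightarrow>
     (\<exists>f. inj_on f VH \<and> f ` VH \<subseteq> V \<and> (\<forall>e\<in>EH. f ` e \<in> E))"

text \<open>The graph k S_{l-1} \<union> P_l: copies i < k are stars with centre (i,0) and leaves (i,j), 1 \<le> j < l;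
  copy k is the path (k,0) - (k,1) - ... - (k,l-1).\<close>
definition SP_verts :: "nat \<Rightarrow> nat \<Rightarrow> (nat \<times> nat) set" where
  "SP_verts k l = {(i, j). i \<le> k \<and> j < l}"

definition SP_edges :: "nat \<Rightarrow> nat \<Rightarrow> (nat \<times> nat) set set" where
  "SP_edges k l = {{(i, 0), (i, j)} | i j. i < k \<and> 1 \<le> j \<and> j < l}
                \<union> {{(k, j), (k, j + 1)} | j. j + 1 < l}"

end

theory Submission
  imports Defs
begin

definition nbrs :: "'a set set \<Rightarrow> 'a \<Rightarrow> 'a set" where
  "nbrs E v = {w. {v, w} \<in> E}"

definition del :: "'a set set \<Rightarrow> 'a set \<Rightarrow> 'a set set" where
  "del E S = {e\<in>E. e \<inter> S = {}}"

lemma sg_finite_E: assumes "simple_graph V E" shows "finite E"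
proof -
  have "E \<subseteq> Pow V" "finite V" using assms unfolding simple_graph_def by auto
  then show ?thesis by (meson finite_Pow_iff finite_subset)
qed

lemma sg_finite_V: "simple_graph V E \<Longrightarrow> finite V"
  unfolding simple_graph_def by auto

lemma sg_del: "simple_graph V E \<Longrightarrow> simple_graph (V - S) (del E S)"
  unfolding simple_graph_def del_def by fastforce

lemma bip_del: assumes "bipartite V E" shows "bipartite (V - S) (del E S)"
proof -
  obtain A B where AB: "A \<inter> B = {}" "A \<union> B = V" "\<forall>e\<in>E. \<exists>u\<in>A. \<exists>v\<in>B. e = {u, v}"
    using assms unfolding bipartite_def by blast
  have "\<forall>e\<in>{e \<in> E. e \<inter> S = {}}. \<exists>u\<in>A - S. \<exists>v\<in>B - S. e = {u, v}"
  proof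
    fix e assume "e \<in> {e \<in> E. e \<inter> S = {}}"
    then have e: "e \<in> E" "e \<inter> S = {}" by auto
    then obtain u v where "u \<in> A" "v \<in> B" "e = {u,v}" using AB by blast
    then show "\<exists>u\<in>A - S. \<exists>v\<in>B - S. e = {u, v}" using e by blast
  qed
  then show ?thesis unfolding bipartite_def del_def
    by (intro exI[of _ "A - S"] exI[of _ "B - S"]) (use AB in auto)
qed

lemma del_sub: "del E S \<subseteq> E" unfolding del_def by auto

lemma nbrs_sub: assumes "simple_graph V E" shows "nbrs E v \<subseteq> V - {v}"
proof
  fix w assume "w \<in> nbrs E v"
  then have "{v,w} \<in> E" unfolding nbrs_def by auto
  then obtain a b where "{v,w} = {a,b}" "a \<noteq> b" "a \<in> V" "b \<in> V"
    using assms unfolding simple_graph_def by blast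
  then show "w \<in> V - {v}" by (auto simp: doubleton_eq_iff)
qed

lemma deg_eq: assumes "simple_graph V E"
  shows "card {e\<in>E. v\<in>e} = card (nbrs E v)"
proof -
  have "{e\<in>E. v\<in>e} = (\<lambda>w. {v,w}) ` nbrs E v"
  proof
    show "{e \<in> E. v \<in> e} \<subseteq> (\<lambda>w. {v, w}) ` nbrs E v"
    proof
      fix e assume e: "e \<in> {e \<in> E. v \<in> e}"
      then obtain a b where ab: "e = {a,b}"
        using assms unfolding simple_graph_def by blast
      show "e \<in> (\<lambda>w. {v, w}) ` nbrs E v"
      proof (cases "v = a")
        case True then show ?thesis using e ab unfolding nbrs_def by auto
      next
        case False then have "v = b" using e ab by auto
        then show ?thesis using e ab unfolding nbrs_def by (auto simp: insert_commute)
      qed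
    qed
  qed (auto simp: nbrs_def)
  moreover have "inj_on (\<lambda>w. {v,w}) (nbrs E v)"
    by (auto simp: inj_on_def doubleton_eq_iff)
  ultimately show ?thesis by (simp add: card_image)
qed

lemma card_split1: assumes "finite E"
  shows "card E = card (del E {v}) + card {e\<in>E. v\<in>e}"
proof -
  have "E = del E {v} \<union> {e\<in>E. v\<in>e}" unfolding del_def by auto
  moreover have "del E {v} \<inter> {e\<in>E. v\<in>e} = {}" unfolding del_def by auto
  ultimately show ?thesis using assms
    by (metis (no_types, lifting) card_Un_disjoint finite_Un)
qed

lemma card_splitT: assumes "finite E" "finite T"
  shows "card E \<le> card (del E T) + (\<Sum>t\<in>T. card {e\<in>E. t\<in>e})"
proof -
  have "E \<subseteq> del E T \<union> (\<Union>t\<in>T. {e\<in>E. t\<in>e})" unfolding del_def by auto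
  then have "card E \<le> card (del E T \<union> (\<Union>t\<in>T. {e\<in>E. t\<in>e}))"
    using assms by (intro card_mono) (auto simp: del_def)
  also have "\<dots> \<le> card (del E T) + card (\<Union>t\<in>T. {e\<in>E. t\<in>e})" by (rule card_Un_le)
  also have "card (\<Union>t\<in>T. {e\<in>E. t\<in>e}) \<le> (\<Sum>t\<in>T. card {e\<in>E. t\<in>e})"
    by (rule card_UN_le[OF assms(2)])
  finally show ?thesis by simp
qed

lemma cross: assumes "A \<inter> B = {}" "\<forall>e\<in>E. \<exists>u\<in>A. \<exists>v\<in>B. e = {u, v}" "{x,y} \<in> E" "x \<in> A" shows "y \<in> B"
proof -
  obtain u v where "u \<in> A" "v \<in> B" "{x,y} = {u,v}" using assms by blast
  then show ?thesis using assms by (auto simp: doubleton_eq_iff)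
qed

lemma bip_side: assumes "bipartite V E" "x \<in> V"
  shows "\<exists>A B. A \<inter> B = {} \<and> A \<union> B = V \<and> (\<forall>e\<in>E. \<exists>u\<in>A. \<exists>v\<in>B. e = {u, v}) \<and> x \<in> A"
proof -
  obtain A B where AB: "A \<inter> B = {}" "A \<union> B = V" "\<forall>e\<in>E. \<exists>u\<in>A. \<exists>v\<in>B. e = {u, v}"
    using assms unfolding bipartite_def by blast
  show ?thesis
  proof (cases "x \<in> A")
    case True then show ?thesis using AB by blast
  next
    case False
    have "\<forall>e\<in>E. \<exists>u\<in>B. \<exists>v\<in>A. e = {u, v}" using AB(3) by (metis insert_commute)
    then show ?thesis using AB False assms(2) by blast
  qed
qed

fun walk :: "'a set set \<Rightarrow> 'a list \<Rightarrow> bool" where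
  "walk E [] = True"
| "walk E [x] = True"
| "walk E (x # y # zs) = ({x, y} \<in> E \<and> walk E (y # zs))"

lemma walk_Cons: "walk E (x # xs) \<longleftrightarrow> walk E xs \<and> (xs \<noteq> [] \<longrightarrow> {x, hd xs} \<in> E)"
  by (cases xs) auto

lemma walk_append: "walk E (xs @ ys) \<longleftrightarrow> walk E xs \<and> walk E ys \<and> (xs \<noteq> [] \<and> ys \<noteq> [] \<longrightarrow> {last xs, hd ys} \<in> E)"
  by (induction xs) (auto simp: walk_Cons)

lemma walk_nth: "walk E xs \<Longrightarrow> Suc j < length xs \<Longrightarrow> {xs!j, xs!Suc j} \<in> E"
proof (induction xs arbitrary: j)
  case (Cons x xs)
  then show ?case by (cases j) (auto simp: walk_Cons hd_conv_nth)
qed simp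

lemma walk_take: "walk E xs \<Longrightarrow> walk E (take n xs)"
  by (metis append_take_drop_id walk_append)

lemma walk_mono: "walk E xs \<Longrightarrow> E \<subseteq> E' \<Longrightarrow> walk E' xs"
  by (induction xs rule: walk.induct) auto

lemma walk_parity:
  assumes "walk E xs" "xs \<noteq> []" "set xs \<subseteq> A \<union> B" "A \<inter> B = {}"
    "\<forall>e\<in>E. \<exists>u\<in>A. \<exists>v\<in>B. e = {u,v}" "hd xs \<in> A" "distinct xs"
  shows "card (set xs \<inter> B) = length xs div 2 \<and> card (set xs \<inter> A) = (length xs + 1) div 2
     \<and> (last xs \<in> A \<longleftrightarrow> odd (length xs))"
  using assms
proof (induction xs arbitrary: A B)
  case Nil then show ?case by simp
next
  case (Cons x xs)
  show ?case
  proof (cases xs)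
    case Nil
    then show ?thesis using Cons.prems by auto
  next
    case (Cons y zs)
    have xA: "x \<in> A" using Cons.prems by simp
    have e: "{x,y} \<in> E" using Cons.prems Cons by simp
    have yB: "y \<in> B" using cross[OF Cons.prems(4) Cons.prems(5) e xA] .
    have sw: "\<forall>e\<in>E. \<exists>u\<in>B. \<exists>v\<in>A. e = {u,v}" using Cons.prems(5) by (metis insert_commute)
    have IH: "card (set xs \<inter> A) = length xs div 2 \<and> card (set xs \<inter> B) = (length xs + 1) div 2
     \<and> (last xs \<in> B \<longleftrightarrow> odd (length xs))"
    proof -
      have "walk E xs" using Cons.prems(1) Cons by simp
      moreover have "set xs \<subseteq> B \<union> A" using Cons.prems(3) by auto
      moreover have "distinct xs" using Cons.prems(7) by simp
      moreover have "B \<inter> A = {}" using Cons.prems(4) by auto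
      moreover have "xs \<noteq> []" "hd xs \<in> B" using yB Cons by auto
      ultimately show ?thesis using Cons.IH[of B A] sw by blast
    qed
    have xnB: "x \<notin> B" using xA Cons.prems(4) by auto
    have xn: "x \<notin> set xs" using Cons.prems(7) by simp
    have 1: "set (x#xs) \<inter> B = set xs \<inter> B" using xnB by auto
    have 2: "set (x#xs) \<inter> A = insert x (set xs \<inter> A)" using xA by auto
    have 3: "card (insert x (set xs \<inter> A)) = Suc (card (set xs \<inter> A))" using xn by simp
    have lx: "last xs \<in> A \<union> B" using Cons.prems(3) Cons last_in_set[of xs] by auto
    have 4: "last (x#xs) = last xs" using Cons by simp
    show ?thesis unfolding 1 2 3 4 using IH lx Cons.prems(4) by auto
  qed
qed



lemma path_lemma:
  fixes V :: "'a set" and E :: "'a set set" and h l :: nat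
  assumes h2: "h \<ge> 2" and hl: "l = 2*h \<or> l = 2*h+1"
  shows "simple_graph V E \<Longrightarrow> bipartite V E \<Longrightarrow> card E > (h-1) * card V \<Longrightarrow>
    \<exists>xs. walk E xs \<and> distinct xs \<and> set xs \<subseteq> V \<and> length xs = l"
proof (induction "card V" arbitrary: V E rule: less_induct)
  case less
  have finV: "finite V" using less.prems sg_finite_V by blast
  have finE: "finite E" using less.prems sg_finite_E by blast
  show ?case
  proof (cases "\<exists>v\<in>V. card (nbrs E v) < h")
    case True
    then obtain v where v: "v \<in> V" "card (nbrs E v) < h" by blast
    let ?V = "V - {v}" and ?E = "del E {v}"
    have c1: "card E = card ?E + card (nbrs E v)"
      using card_split1[OF finE, of v] deg_eq[OF less.prems(1)] by simp
    have cV: "card V = Suc (card ?V)" using v finV by (metis card_Suc_Diff1)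
    have "(h-1) * card V = (h-1) * card ?V + (h-1)" using cV by simp
    then have "card ?E > (h-1) * card ?V" using c1 v(2) less.prems(3) by linarith
    moreover have "card ?V < card V" using cV by simp
    ultimately obtain xs where "walk ?E xs" "distinct xs" "set xs \<subseteq> ?V" "length xs = l"
      using less.hyps[of ?V ?E] sg_del[OF less.prems(1)] bip_del[OF less.prems(2)] by blast
    then show ?thesis using walk_mono[OF _ del_sub] by blast
  next
    case False
    then have deg: "\<forall>v\<in>V. card (nbrs E v) \<ge> h" by auto
    have "E \<noteq> {}" using less.prems(3) by auto
    then obtain e where "e \<in> E" by blast
    then obtain u w where "e = {u,w}" "u \<in> V" using less.prems(1) unfolding simple_graph_def by blast
    define P where "P m \<longleftrightarrow> (\<exists>xs. walk E xs \<and> distinct xs \<and> set xs \<subseteq> V \<and> length xs = m)" for m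
    have P1: "P 1" unfolding P_def using \<open>u \<in> V\<close> by (intro exI[of _ "[u]"]) auto
    have Pb: "\<forall>y. P y \<longrightarrow> y \<le> card V"
    proof (intro allI impI)
      fix y assume "P y"
      then obtain ys where "distinct ys" "set ys \<subseteq> V" "length ys = y" unfolding P_def by blast
      then show "y \<le> card V" using card_mono[OF finV] distinct_card by metis
    qed
    obtain m where Pm: "P m" and mmax: "\<forall>y. P y \<longrightarrow> y \<le> m"
      using Nat.ex_has_greatest_nat[OF P1 Pb] by blast
    obtain xs where xs: "walk E xs" "distinct xs" "set xs \<subseteq> V" "length xs = m"
      using Pm unfolding P_def by blast
    show ?thesis
    proof (cases "m \<ge> l")
      case True
      then show ?thesis using xs walk_take[OF xs(1), of l]
        by (intro exI[of _ "take l xs"]) (auto dest: in_set_takeD)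
    next
      case False
      have m1: "m \<ge> 1" using P1 mmax by blast
      have maxn: "nbrs E (hd ys) \<subseteq> set ys" if ys: "walk E ys" "distinct ys" "set ys \<subseteq> V" "length ys = m" for ys
      proof
        fix w assume w: "w \<in> nbrs E (hd ys)"
        show "w \<in> set ys"
        proof (rule ccontr)
          assume wn: "w \<notin> set ys"
          have "ys \<noteq> []" using ys m1 by auto
          have "{w, hd ys} \<in> E" using w unfolding nbrs_def by (simp add: insert_commute)
          then have "walk E (w # ys)" using ys by (simp add: walk_Cons)
          moreover have "w \<in> V" using w nbrs_sub[OF less.prems(1)] by blast
          ultimately have "P (Suc m)" unfolding P_def using ys wn
            by (intro exI[of _ "w # ys"]) auto
          then show False using mmax by fastforce
        qed
      qed
      have xsne: "xs \<noteq> []" using xs m1 by auto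
      have "hd xs \<in> V" using xs xsne by auto
      then obtain A B where AB: "A \<inter> B = {}" "A \<union> B = V" "\<forall>e\<in>E. \<exists>u\<in>A. \<exists>v\<in>B. e = {u, v}" "hd xs \<in> A"
        using bip_side[OF less.prems(2) \<open>hd xs \<in> V\<close>] by blast
      have sAB: "set xs \<subseteq> A \<union> B" using xs(3) AB(2) by simp
      have par: "card (set xs \<inter> B) = m div 2 \<and> card (set xs \<inter> A) = (m + 1) div 2 \<and> (last xs \<in> A \<longleftrightarrow> odd m)"
        using walk_parity[OF xs(1) xsne sAB AB(1) AB(3) AB(4) xs(2)] unfolding xs(4) .
      have nB: "nbrs E (hd xs) \<subseteq> set xs \<inter> B"
        using maxn[OF xs] cross[OF AB(1) AB(3) _ AB(4)] unfolding nbrs_def by auto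
      have "h \<le> card (nbrs E (hd xs))" using deg \<open>hd xs \<in> V\<close> by auto
      also have "\<dots> \<le> card (set xs \<inter> B)" using nB by (intro card_mono) auto
      finally have "h \<le> m div 2" using par by simp
      then have lm: "l = 2*h+1" "m = 2*h" using False hl by presburger+
      have neq: "nbrs E (hd xs) = set xs \<inter> B"
        by (rule card_seteq) (use nB par lm \<open>h \<le> card (nbrs E (hd xs))\<close> in auto)
      have lin: "last xs \<in> set xs" using xsne by simp
      have "last xs \<notin> A" using par lm by simp
      then have "last xs \<in> B" using lin sAB by blast
      then have "last xs \<in> nbrs E (hd xs)" using neq xsne last_in_set[of xs] by auto
      then have close0: "{last xs, hd xs} \<in> E" unfolding nbrs_def by (simp add: insert_commute)
      have rot: "walk E (rotate i xs) \<and> {last (rotate i xs), hd (rotate i xs)} \<in> E" for i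
      proof (induction i)
        case 0 then show ?case using xs close0 by simp
      next
        case (Suc i)
        let ?ys = "rotate i xs"
        have "length ?ys = m" using xs by simp
        then have "Suc (Suc 0) \<le> length ?ys" using lm h2 by simp
        then have "length (tl ?ys) \<ge> 1" by (simp only: length_tl)
        then have ne: "?ys \<noteq> []" "tl ?ys \<noteq> []" by (metis list.size(3) not_one_le_zero list.sel(2))+
        then obtain y zs where yz: "?ys = y # zs" "zs \<noteq> []"
          by (metis list.collapse)
        have w1: "walk E zs" "{y, hd zs} \<in> E" using Suc yz by (auto simp: walk_Cons)
        have w2: "{last zs, y} \<in> E" using Suc yz by simp
        have "rotate (Suc i) xs = zs @ [y]" using yz by simp
        then show ?case using w1 w2 yz(2) by (simp add: walk_append insert_commute)
      qed
      define S where "S = set xs"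
      have closed: "nbrs E x \<subseteq> S" if "x \<in> S" for x
      proof -
        obtain i where i: "i < m" "x = xs ! i" using \<open>x \<in> S\<close> xs unfolding S_def by (metis in_set_conv_nth)
        have "hd (rotate i xs) = x" using hd_rotate_conv_nth[OF xsne, of i] i xs by simp
        moreover have "walk E (rotate i xs)" using rot by blast
        ultimately show ?thesis using maxn[of "rotate i xs"] xs unfolding S_def by simp
      qed
      let ?V = "V - S" and ?E = "del E S"
      have Esub: "E \<subseteq> ?E \<union> {e\<in>E. e \<subseteq> S}"
      proof
        fix e assume e: "e \<in> E"
        then obtain a b where ab: "e = {a,b}" using less.prems(1) unfolding simple_graph_def by blast
        show "e \<in> ?E \<union> {e\<in>E. e \<subseteq> S}"
        proof (cases "e \<inter> S = {}")
          case True then show ?thesis using e unfolding del_def by auto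
        next
          case False
          then have "a \<in> S \<or> b \<in> S" using ab by auto
          moreover have "{a,b} \<in> E" using e ab by simp
          moreover have "{b,a} \<in> E" using e ab by (metis insert_commute)
          ultimately have "a \<in> S \<and> b \<in> S"
          proof (elim disjE)
            assume 1: "a \<in> S" "{a,b} \<in> E"
            then have "b \<in> nbrs E a" unfolding nbrs_def by simp
            then show ?thesis using closed[OF 1(1)] 1(1) by blast
          next
            assume 1: "b \<in> S" "{b,a} \<in> E"
            then have "a \<in> nbrs E b" unfolding nbrs_def by simp
            then show ?thesis using closed[OF 1(1)] 1(1) by blast
          qed
          then have "e \<subseteq> S" using ab by simp
          then show ?thesis using e by simp
        qed
      qed
      have "{e\<in>E. e \<subseteq> S} \<subseteq> (\<lambda>(a,b). {a,b}) ` ((S \<inter> A) \<times> (S \<inter> B))"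
      proof
        fix e assume e: "e \<in> {e\<in>E. e \<subseteq> S}"
        then have eE: "e \<in> E" "e \<subseteq> S" by auto
        obtain a b where ab: "a \<in> A" "b \<in> B" "e = {a,b}" using AB(3) eE(1) by blast
        then have "(a,b) \<in> (S \<inter> A) \<times> (S \<inter> B)" using eE(2) by auto
        then show "e \<in> (\<lambda>(a,b). {a,b}) ` ((S \<inter> A) \<times> (S \<inter> B))" using ab(3)
          by (metis (mono_tags, lifting) case_prod_conv image_eqI)
      qed
      moreover have fX: "finite ((S \<inter> A) \<times> (S \<inter> B))" unfolding S_def by simp
      ultimately have "card {e\<in>E. e \<subseteq> S} \<le> card ((\<lambda>(a,b). {a,b}) ` ((S \<inter> A) \<times> (S \<inter> B)))"
        by (intro card_mono) auto
      also have "\<dots> \<le> card ((S \<inter> A) \<times> (S \<inter> B))" using card_image_le[OF fX] by blast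
      also have "\<dots> = h * h" using par lm unfolding S_def by (simp add: card_cartesian_product Int_commute)
      finally have cin: "card {e\<in>E. e \<subseteq> S} \<le> h * h" .
      have "card E \<le> card (?E \<union> {e\<in>E. e \<subseteq> S})" using Esub finE by (intro card_mono) (auto simp: del_def)
      also have "\<dots> \<le> card ?E + card {e\<in>E. e \<subseteq> S}" by (rule card_Un_le)
      finally have c1: "card E \<le> card ?E + h*h" using cin by linarith
      have cS: "card S = 2*h" using xs lm distinct_card unfolding S_def by metis
      have "S \<subseteq> V" using xs unfolding S_def by simp
      then have "card ?V = card V - card S" "card S \<le> card V"
        using finV card_Diff_subset[of S V] card_mono[OF finV] by (auto simp: S_def)
      then have cV: "card V = card ?V + 2*h" using cS by simp
      have hh: "h * h \<le> (h-1) * (2*h)"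
      proof -
        obtain g where "h = g + 2" using h2 by (metis add.commute le_Suc_ex)
        then show ?thesis by (simp add: algebra_simps)
      qed
      have "(h-1) * card V = (h-1) * card ?V + (h-1)*(2*h)" using cV by (simp add: algebra_simps)
      then have "card ?E > (h-1) * card ?V" using c1 hh less.prems(3) by linarith
      moreover have "card ?V < card V" using cV h2 by simp
      ultimately obtain ys where "walk ?E ys" "distinct ys" "set ys \<subseteq> ?V" "length ys = l"
        using less.hyps[of ?V ?E] sg_del[OF less.prems(1)] bip_del[OF less.prems(2)] by blast
      then show ?thesis using walk_mono[OF _ del_sub] by blast
    qed
  qed
qed



lemma base_embed:
  assumes "walk E xs" "distinct xs" "set xs \<subseteq> V" "length xs = l"
  shows "contains_subgraph (SP_verts 0 l) (SP_edges 0 l) V E"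
proof -
  define f where "f = (\<lambda>(i::nat, j::nat). xs ! j)"
  have "inj_on f (SP_verts 0 l)"
    unfolding inj_on_def f_def SP_verts_def using assms(2,4) by (auto simp: nth_eq_iff_index_eq)
  moreover have "f ` SP_verts 0 l \<subseteq> V" unfolding f_def SP_verts_def using assms(3,4) nth_mem by fastforce
  moreover have "\<forall>e\<in>SP_edges 0 l. f ` e \<in> E"
  proof
    fix e assume "e \<in> SP_edges 0 l"
    then obtain j where "e = {(0,j),(0,j+1)}" "j+1 < l" unfolding SP_edges_def by auto
    then show "f ` e \<in> E" unfolding f_def using walk_nth[OF assms(1), of j] assms(4) by simp
  qed
  ultimately show ?thesis unfolding contains_subgraph_def by blast
qed

lemma extend:
  assumes f1: "inj_on f (SP_verts k l)" and f2: "f ` SP_verts k l \<subseteq> V"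
    and f3: "\<forall>e\<in>SP_edges k l. f ` e \<in> E"
    and v: "v \<notin> f ` SP_verts k l" "v \<in> V"
    and q1: "inj_on q {1..<l}" and q2: "q ` {1..<l} \<subseteq> nbrs E v"
    and q3: "q ` {1..<l} \<inter> f ` SP_verts k l = {}" and q4: "v \<notin> q ` {1..<l}"
    and nV: "nbrs E v \<subseteq> V"
  shows "contains_subgraph (SP_verts (Suc k) l) (SP_edges (Suc k) l) V E"
proof -
  define F where "F = (\<lambda>(i::nat, j::nat). if i < k then (i,j) else (k,j))"
  define g where "g = (\<lambda>(i::nat, j::nat). if i = k then (if j = 0 then v else q j) else f (F (i,j)))"
  have FS: "F (i,j) \<in> SP_verts k l" if "i \<le> Suc k" "j < l" for i j
    using that unfolding F_def SP_verts_def by auto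
  have Finj: "(i,j) = (i',j')" if "F (i,j) = F (i',j')" "i \<noteq> k" "i' \<noteq> k" "i \<le> Suc k" "i' \<le> Suc k" for i j i' j'
    using that unfolding F_def by (auto split: if_splits)
  have inj: "inj_on g (SP_verts (Suc k) l)"
  proof (rule inj_onI)
    fix a b assume a: "a \<in> SP_verts (Suc k) l" and b: "b \<in> SP_verts (Suc k) l" and eq: "g a = g b"
    obtain i j where ij: "a = (i,j)" "i \<le> Suc k" "j < l" using a unfolding SP_verts_def by auto
    obtain i' j' where ij': "b = (i',j')" "i' \<le> Suc k" "j' < l" using b unfolding SP_verts_def by auto
    show "a = b"
    proof (cases "i = k")
      case True
      show ?thesis
      proof (cases "i' = k")
        case True
        show ?thesis
        proof (cases "j = 0")
          case True
          then show ?thesis using eq ij ij' \<open>i = k\<close> \<open>i' = k\<close> q4 unfolding g_def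
            by (auto split: if_splits)
        next
          case False
          then have "q j \<in> q ` {1..<l}" using ij by auto
          then show ?thesis using eq ij ij' \<open>i = k\<close> \<open>i' = k\<close> q4 q1 False unfolding g_def
            by (auto split: if_splits simp: inj_on_def)
        qed
      next
        case False
        have gb: "g b = f (F (i',j'))" using False ij' unfolding g_def by simp
        have "f (F (i',j')) \<in> f ` SP_verts k l" using FS[OF ij'(2,3)] by blast
        moreover have "g a = v \<or> g a \<in> q ` {1..<l}" using ij \<open>i = k\<close> unfolding g_def by auto
        ultimately show ?thesis using eq gb v(1) q3 by auto
      qed
    next
      case False
      have ga: "g a = f (F (i,j))" using False ij unfolding g_def by simp
      have fa: "f (F (i,j)) \<in> f ` SP_verts k l" using FS[OF ij(2,3)] by blast
      show ?thesis
      proof (cases "i' = k")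
        case True
        have "g b = v \<or> g b \<in> q ` {1..<l}" using ij' True unfolding g_def by auto
        then show ?thesis using eq ga fa v(1) q3 by auto
      next
        case False
        have gb: "g b = f (F (i',j'))" using False ij' unfolding g_def by simp
        then have "F (i,j) = F (i',j')" using eq ga f1 FS[OF ij(2,3)] FS[OF ij'(2,3)]
          unfolding inj_on_def by metis
        then show ?thesis using Finj ij ij' False \<open>i \<noteq> k\<close> by blast
      qed
    qed
  qed
  have img: "g ` SP_verts (Suc k) l \<subseteq> V"
  proof
    fix x assume "x \<in> g ` SP_verts (Suc k) l"
    then obtain i j where ij: "x = g (i,j)" "i \<le> Suc k" "j < l" unfolding SP_verts_def by auto
    show "x \<in> V"
    proof (cases "i = k")
      case True
      have "j \<in> {1..<l} \<Longrightarrow> q j \<in> V" using q2 nV by blast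
      then show ?thesis using ij v(2) True unfolding g_def by (auto split: if_splits)
    next
      case False
      then show ?thesis using ij FS[OF ij(2,3)] f2 unfolding g_def by auto
    qed
  qed
  have edg: "\<forall>e\<in>SP_edges (Suc k) l. g ` e \<in> E"
  proof
    fix e assume "e \<in> SP_edges (Suc k) l"
    then consider (st) i j where "e = {(i,0),(i,j)}" "i < Suc k" "1 \<le> j" "j < l"
      | (pa) j where "e = {(Suc k, j),(Suc k, j + 1)}" "j + 1 < l"
      unfolding SP_edges_def by blast
    then show "g ` e \<in> E"
    proof cases
      case st
      show ?thesis
      proof (cases "i = k")
        case True
        have "q j \<in> nbrs E v" using q2 st by auto
        then have "{v, q j} \<in> E" unfolding nbrs_def by simp
        then show ?thesis using st True unfolding g_def by simp
      next
        case False
        then have "i < k" using st by simp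
        then have "{(i,0),(i,j)} \<in> SP_edges k l" using st unfolding SP_edges_def by blast
        then have "f ` {(i,0),(i,j)} \<in> E" using f3 by blast
        then show ?thesis using st \<open>i < k\<close> unfolding g_def F_def by simp
      qed
    next
      case pa
      then have "{(k,j),(k,j+1)} \<in> SP_edges k l" unfolding SP_edges_def by blast
      then have "f ` {(k,j),(k,j+1)} \<in> E" using f3 by blast
      then show ?thesis using pa unfolding g_def F_def by simp
    qed
  qed
  show ?thesis unfolding contains_subgraph_def using inj img edg by blast
qed



lemma ineq1:
  fixes K H L :: int
  assumes "L \<ge> 4" "H \<ge> 2" "K \<ge> 0"
  shows "(K+1+H-1)^2 - (K+1+H-2)*L + L^2*(K+1) + L^2 - L \<ge> (K+H-1)^2 - (K+H-2)*L + L^2*K + L^2 - L + L"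
proof -
  have LL: "L*L \<ge> 2*L" using assms by (intro mult_right_mono) auto
  show ?thesis apply (simp add: power2_eq_square algebra_simps) using LL assms by linarith
qed

lemma ineq2:
  fixes K H L :: int
  shows "(K+1+H-1)^2 - (K+1+H-2)*L + L^2*(K+1) + L^2 - L + (K+H-1)*L + 1 - L*((K+2)*L - 2) = (K+H)^2 + L + 1"
  by (simp add: power2_eq_square algebra_simps)



definition NB :: "nat \<Rightarrow> nat \<Rightarrow> int" where
 "NB k l = (int k + int (l div 2) - 1)^2 - (int k + int (l div 2) - 2) * int l
                          + (int l)^2 * int k + (int l)^2 - int l"

lemma NB_Suc: assumes "l \<ge> 4" shows "NB (Suc k) l \<ge> NB k l + int l"
proof -
  have "int (l div 2) \<ge> 2" using assms by simp
  then have "NB (Suc k) l \<ge> NB k l + int l" using ineq1[of "int l" "int (l div 2)" "int k"] assms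
    unfolding NB_def by (simp add: algebra_simps)
  then show ?thesis .
qed

lemma NB_case2: "NB (Suc k) l + (int k + int (l div 2) - 1) * int l + 1 - int l * ((int k + 2) * int l - 2)
   = (int k + int (l div 2))^2 + int l + 1"
  using ineq2[of "int k" "int (l div 2)" "int l"] unfolding NB_def by (simp add: algebra_simps)

lemma edges_le_side:
  assumes "finite A" "finite E" "\<forall>e\<in>E. \<exists>u\<in>A. \<exists>v\<in>B. e = {u, v}" "\<forall>a\<in>A. card {e\<in>E. a\<in>e} \<le> D"
  shows "card E \<le> card A * D"
proof -
  have "E \<subseteq> (\<Union>a\<in>A. {e\<in>E. a\<in>e})" using assms(3) by blast
  then have "card E \<le> card (\<Union>a\<in>A. {e\<in>E. a\<in>e})"
    using assms(1,2) by (intro card_mono) auto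
  also have "\<dots> \<le> (\<Sum>a\<in>A. card {e\<in>E. a\<in>e})" by (rule card_UN_le[OF assms(1)])
  also have "\<dots> \<le> (\<Sum>a\<in>A. D)" using assms(4) by (intro sum_mono) auto
  finally show ?thesis by simp
qed



lemma card_SP: "card (SP_verts k l) = Suc k * l"
proof -
  have "SP_verts k l = {..k} \<times> {..<l}" unfolding SP_verts_def by auto
  then show ?thesis by (simp add: card_cartesian_product)
qed

lemma finite_SP: "finite (SP_verts k l)"
proof -
  have "SP_verts k l = {..k} \<times> {..<l}" unfolding SP_verts_def by auto
  then show ?thesis by simp
qed

lemma lin_aux:
  fixes X Y P1 P2 Q R S N n G L :: int
  assumes "Y \<le> X + R" "P1 + 1 \<le> Y" "N + Q + 1 - R = S + L + 1" "N \<le> n" "P1 = P2 + n"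
    "G = P2 - Q" "0 \<le> S" "0 \<le> L"
  shows "G < X"
  using assms by linarith

lemma main:
  assumes l4: "l \<ge> 4"
  shows "simple_graph V E \<Longrightarrow> bipartite V E \<Longrightarrow> int (card V) \<ge> NB k l \<Longrightarrow>
    card E > (k + l div 2 - 1) * card V \<Longrightarrow> contains_subgraph (SP_verts k l) (SP_edges k l) V E"
proof (induction k arbitrary: V E)
  case 0
  have "l div 2 \<ge> 2" "l = 2*(l div 2) \<or> l = 2*(l div 2)+1" using l4 by auto
  then obtain xs where "walk E xs" "distinct xs" "set xs \<subseteq> V" "length xs = l"
    using path_lemma[of "l div 2" l V E] "0.prems" by auto
  then show ?case by (rule base_embed)
next
  case (Suc k)
  define h where "h = l div 2"
  define c where "c = k + h - 1"
  have h2: "h \<ge> 2" and hl: "l \<le> 2*h+1" using l4 unfolding h_def by auto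
  have cE: "card E > (c+1) * card V" using Suc.prems(4) h2 unfolding c_def h_def by simp
  have finV: "finite V" using Suc.prems sg_finite_V by blast
  have finE: "finite E" using Suc.prems sg_finite_E by blast
  have nbV: "nbrs E v \<subseteq> V - {v}" for v using nbrs_sub[OF Suc.prems(1)] .
  have finN: "finite (nbrs E v)" for v using nbV finV by (meson finite_Diff finite_subset)
  have NBs: "NB (Suc k) l \<ge> NB k l + int l" by (rule NB_Suc[OF l4])
  show ?case
  proof (cases "\<exists>v\<in>V. card (nbrs E v) \<ge> (k+2)*l - 1")
    case True
    then obtain v where v: "v \<in> V" "card (nbrs E v) \<ge> (k+2)*l - 1" by blast
    let ?V = "V - {v}" and ?E = "del E {v}"
    have c1: "card E = card ?E + card (nbrs E v)"
      using card_split1[OF finE, of v] deg_eq[OF Suc.prems(1)] by simp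
    have cV: "card V = Suc (card ?V)" using v finV by (metis card_Suc_Diff1)
    have "card (nbrs E v) \<le> card ?V" using nbV finV by (intro card_mono) auto
    moreover have "(c+1) * card V = c * card ?V + c + card ?V + 1" using cV by (simp add: algebra_simps)
    ultimately have cE': "card ?E > c * card ?V" using c1 cE by linarith
    have "int (card V) = int (card ?V) + 1" using cV by simp
    then have "int (card ?V) \<ge> NB k l" using NBs Suc.prems(3) l4 by linarith
    then have "contains_subgraph (SP_verts k l) (SP_edges k l) ?V ?E"
      using Suc.IH[OF sg_del[OF Suc.prems(1)] bip_del[OF Suc.prems(2)]] cE' unfolding c_def h_def
      by simp
    then obtain f where f: "inj_on f (SP_verts k l)" "f ` SP_verts k l \<subseteq> ?V" "\<forall>e\<in>SP_edges k l. f ` e \<in> ?E"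
      unfolding contains_subgraph_def by blast
    let ?L = "nbrs E v - f ` SP_verts k l"
    have "card (f ` SP_verts k l) \<le> Suc k * l" using card_image_le[OF finite_SP] card_SP by metis
    moreover have "card (nbrs E v) - card (f ` SP_verts k l) \<le> card ?L"
      using diff_card_le_card_Diff[OF finite_imageI[OF finite_SP]] by blast
    ultimately have "card ?L \<ge> l - 1" using v(2) by (simp add: algebra_simps)
    then have "card {1..<l} \<le> card ?L" by simp
    then obtain q where q: "q ` {1..<l} \<subseteq> ?L" "inj_on q {1..<l}"
      using card_le_inj[of "{1..<l}" ?L] finN by blast
    have fE: "\<forall>e\<in>SP_edges k l. f ` e \<in> E" using f(3) del_sub by blast
    have vn: "v \<notin> nbrs E v" using nbV by blast
    show ?thesis
      by (rule extend[OF f(1) _ fE, where v=v and q=q]) (use f(2) v q vn nbV[of v] in auto)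
  next
    case False
    then have Dv: "\<forall>v\<in>V. card (nbrs E v) \<le> (k+2)*l - 2" by auto
    obtain A B where AB: "A \<inter> B = {}" "A \<union> B = V" "\<forall>e\<in>E. \<exists>u\<in>A. \<exists>v\<in>B. e = {u, v}"
      using Suc.prems(2) unfolding bipartite_def by blast
    have AB': "\<forall>e\<in>E. \<exists>u\<in>B. \<exists>v\<in>A. e = {u, v}" using AB(3) by (metis insert_commute)
    have "\<exists>v\<in>V. card (nbrs E v) \<ge> l - 1"
    proof (rule ccontr)
      assume "\<not> ?thesis"
      then have d: "\<forall>v\<in>V. card {e\<in>E. v\<in>e} \<le> l - 2" using deg_eq[OF Suc.prems(1)] by force
      have finA: "finite A" "finite B" using AB(2) finV by auto
      have dA: "\<forall>a\<in>A. card {e\<in>E. a\<in>e} \<le> l - 2" using d AB(2) by blast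
      have dB: "\<forall>a\<in>B. card {e\<in>E. a\<in>e} \<le> l - 2" using d AB(2) by blast
      have "card E \<le> card A * (l - 2)"
        by (rule edges_le_side[OF finA(1) finE AB(3) dA])
      moreover have "card E \<le> card B * (l - 2)"
        by (rule edges_le_side[OF finA(2) finE AB' dB])
      moreover have "card V = card A + card B" using AB finA card_Un_disjoint by metis
      ultimately have "2 * card E \<le> card V * (l - 2)" by (simp add: algebra_simps)
      also have "\<dots> \<le> card V * (2 * (c+1))" using hl h2 unfolding c_def by (intro mult_left_mono) auto
      finally show False using cE by (simp add: algebra_simps)
    qed
    then obtain v where v: "v \<in> V" "card (nbrs E v) \<ge> l - 1" by blast
    then have "card {1..<l} \<le> card (nbrs E v)" by simp
    then obtain q where q: "q ` {1..<l} \<subseteq> nbrs E v" "inj_on q {1..<l}"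
      using card_le_inj[of "{1..<l}" "nbrs E v"] finN by blast
    have vn: "v \<notin> q ` {1..<l}" using q nbV by blast
    define T where "T = insert v (q ` {1..<l})"
    have cT: "card T = l" unfolding T_def using vn q(2) l4 by (simp add: card_image)
    have TV: "T \<subseteq> V" unfolding T_def using v q nbV by blast
    have finT: "finite T" unfolding T_def by simp
    let ?V = "V - T" and ?E = "del E T"
    have cV: "card V = card ?V + l" using cT TV finV
      by (metis card_Diff_subset card_mono finite_subset le_add_diff_inverse2)
    have "card E \<le> card ?E + (\<Sum>t\<in>T. card {e\<in>E. t\<in>e})" by (rule card_splitT[OF finE finT])
    also have "(\<Sum>t\<in>T. card {e\<in>E. t\<in>e}) \<le> (\<Sum>t\<in>T. (k+2)*l - 2)"
      using Dv TV deg_eq[OF Suc.prems(1)] by (intro sum_mono) auto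
    finally have c1: "card E \<le> card ?E + l * ((k+2)*l - 2)" using cT by simp
    have l2: "(k+2)*l \<ge> 2" using l4 by simp
    have iE: "int (card E) \<le> int (card ?E) + int l * ((int k+2)*int l - 2)"
    proof -
      have a: "int ((k+2)*l - 2) = (int k + 2)*int l - 2" using l2 by (simp add: of_nat_diff algebra_simps)
      have "int (card E) \<le> int (card ?E + l * ((k+2)*l - 2))" using c1 by linarith
      also have "\<dots> = int (card ?E) + int l * int ((k+2)*l - 2)" by simp
      finally show ?thesis unfolding a .
    qed
    have icE: "int (card E) \<ge> (int k + int h) * int (card V) + 1"
    proof -
      have "card E \<ge> (c+1) * card V + 1" using cE by simp
      moreover have "c + 1 = k + h" using h2 unfolding c_def by simp
      ultimately show ?thesis by (metis of_nat_add of_nat_mono of_nat_mult of_nat_1)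
    qed
    have ic: "int c = int k + int h - 1" using h2 unfolding c_def by simp
    have NBeq: "NB (Suc k) l + (int k + int h - 1) * int l + 1 - int l * ((int k + 2) * int l - 2)
       = (int k + int h)^2 + int l + 1" using NB_case2[of k l] unfolding h_def .
    have "int (card V) \<ge> NB (Suc k) l" using Suc.prems(3) .
    have "int (card ?E) > int c * int (card ?V)"
    proof -
      define n where "n = int (card V)"
      define n' where "n' = int (card ?V)"
      define K where "K = int k"
      define H where "H = int h"
      define L where "L = int l"
      have nn: "n = n' + L" using cV unfolding n_def n'_def L_def by simp
      have e1: "(K+H)*n = (K+H-1)*n + n" by (simp add: algebra_simps)
      have e2: "(K+H-1)*n' = (K+H-1)*n - (K+H-1)*L" using nn by (simp add: algebra_simps)
      have S0: "(K+H)^2 \<ge> 0" by simp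
      have "int (card ?E) > (K+H-1)*n'"
        using lin_aux[OF iE[unfolded n_def[symmetric] n'_def[symmetric] K_def[symmetric] H_def[symmetric] L_def[symmetric]]
           icE[unfolded n_def[symmetric] n'_def[symmetric] K_def[symmetric] H_def[symmetric] L_def[symmetric]]
           NBeq[unfolded n_def[symmetric] n'_def[symmetric] K_def[symmetric] H_def[symmetric] L_def[symmetric]]
           \<open>int (card V) \<ge> NB (Suc k) l\<close>[unfolded n_def[symmetric]] e1 e2 S0] unfolding L_def by simp
      then show ?thesis using ic unfolding n'_def K_def H_def by simp
    qed
    then have cE': "card ?E > c * card ?V" by (metis of_nat_less_iff of_nat_mult)
    have "int (card V) = int (card ?V) + int l" using cV by simp
    then have "int (card ?V) \<ge> NB k l" using NBs Suc.prems(3) by linarith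
    then have "contains_subgraph (SP_verts k l) (SP_edges k l) ?V ?E"
      using Suc.IH[OF sg_del[OF Suc.prems(1)] bip_del[OF Suc.prems(2)]] cE' unfolding c_def h_def
      by simp
    then obtain f where f: "inj_on f (SP_verts k l)" "f ` SP_verts k l \<subseteq> ?V" "\<forall>e\<in>SP_edges k l. f ` e \<in> ?E"
      unfolding contains_subgraph_def by blast
    have fE: "\<forall>e\<in>SP_edges k l. f ` e \<in> E" using f(3) del_sub by blast
    show ?thesis
      by (rule extend[OF f(1) _ fE, where v=v and q=q]) (use f(2) v q vn nbV[of v] T_def in auto)
  qed
qed


theorem lemma3p2:
  fixes V :: "'a set" and E :: "'a set set" and k l :: nat
  assumes "l \<ge> 4"
    and "simple_graph V E"
    and "bipartite V E"
    and "int (card V) \<ge> (int k + int (l div 2) - 1)^2 - (int k + int (l div 2) - 2) * int l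
                          + (int l)^2 * int k + (int l)^2 - int l"
    and "\<not> contains_subgraph (SP_verts k l) (SP_edges k l) V E"
  shows "card E \<le> (k + l div 2 - 1) * card V"
proof (rule ccontr)
  assume "\<not> card E \<le> (k + l div 2 - 1) * card V"
  then have "card E > (k + l div 2 - 1) * card V" by simp
  moreover have "int (card V) \<ge> NB k l" using assms(4) unfolding NB_def .
  ultimately show False using main[OF assms(1) assms(2) assms(3)] assms(5) by blast
qed

end
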